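(* Let $S$ be a $\mathcal{C}$-semigroup with $S\neq\mathcal{C}$ and genus $g$. Then $S$ is pseudo-symmetric if and only if $g=1+\# I_S(F(S))$ and $F(S)/2\in\mathbb{N}^p$.
   Context: An integer cone $\mathcal{C}\subseteq\mathbb{N}^p$ is the set of integer points of a finitely generated rational cone in $\mathbb{Q}_{\ge0}^p$. A $\mathcal{C}$-semigroup is a subset $S\subseteq\mathcal{C}$ containing $0$, closed under addition, with $\mathcal{C}\setminus S$ finite; $\mathcal{H}(S)=\mathcal{C}\setminus S$ and $g=\#\mathcal{H}(S)$. A monomial order $\preceq$ on $\mathbb{N}^p$ is fixed (total order, compatible with addition, $\mathbf 0\preceq\mathbf c$ for all $\mathbf c$), and $F(S)=\max_\preceq\mathcal{H}(S)$. $\mathrm{PF}(S)=\{\mathbf x\in\mathcal{H}(S)\mid \mathbf x+(S\setminus\{0\})\subseteq S\}$. $S$ is pseudo-symmetric if $\mathrm{PF}(S)=\{F(S),F(S)/2\}$. For $L\subseteq\mathbb{N}^p$, $\mathbf x\le_L\mathbf y$ means $\mathbf y-\mathbf x\in L$. For $\mathbf n\in\mathcal{C}$, $I_S(\mathbf n)=\{\mathbf s\in S\mid \mathbf s\le_{\mathcal{C}}\mathbf n\}$. *)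

theory Defs
  imports Complex_Main "HOL-Library.Function_Algebras"
begin

text \<open>Points of N^p are modelled as functions 'n \<Rightarrow> nat with 'n a finite index type
  (p = CARD('n)); addition and 0 are pointwise (Function_Algebras).\<close>

definition integer_cone :: "('n::finite \<Rightarrow> nat) set \<Rightarrow> bool" where
  "integer_cone C \<longleftrightarrow>
     (\<exists>G :: ('n \<Rightarrow> rat) set. finite G \<and> (\<forall>v\<in>G. \<forall>i. v i \<ge> 0) \<and>
        C = {x. \<exists>c :: ('n \<Rightarrow> rat) \<Rightarrow> rat. (\<forall>v\<in>G. c v \<ge> 0) \<and>
                   (\<forall>i. of_nat (x i) = (\<Sum>v\<in>G. c v * v i))})"

definition monomial_order :: "(('n \<Rightarrow> nat) \<Rightarrow> ('n \<Rightarrow> nat) \<Rightarrow> bool) \<Rightarrow> bool" where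
  "monomial_order le \<longleftrightarrow>
     (\<forall>x. le x x) \<and>
     (\<forall>x y. le x y \<and> le y x \<longrightarrow> x = y) \<and>
     (\<forall>x y z. le x y \<and> le y z \<longrightarrow> le x z) \<and>
     (\<forall>x y. le x y \<or> le y x) \<and>
     (\<forall>x y z. le x y \<longrightarrow> le (x + z) (y + z)) \<and>
     (\<forall>c. le 0 c)"

definition C_semigroup :: "('n::finite \<Rightarrow> nat) set \<Rightarrow> ('n \<Rightarrow> nat) set \<Rightarrow> bool" where
  "C_semigroup C S \<longleftrightarrow> integer_cone C \<and> S \<subseteq> C \<and> 0 \<in> S \<and>
     (\<forall>x\<in>S. \<forall>y\<in>S. x + y \<in> S) \<and> finite (C - S)"

definition gaps :: "('n \<Rightarrow> nat) set \<Rightarrow> ('n \<Rightarrow> nat) set \<Rightarrow> ('n \<Rightarrow> nat) set" where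
  "gaps C S = C - S"

definition genus :: "('n \<Rightarrow> nat) set \<Rightarrow> ('n \<Rightarrow> nat) set \<Rightarrow> nat" where
  "genus C S = card (gaps C S)"

definition frobenius ::
  "(('n \<Rightarrow> nat) \<Rightarrow> ('n \<Rightarrow> nat) \<Rightarrow> bool) \<Rightarrow> ('n \<Rightarrow> nat) set \<Rightarrow> ('n \<Rightarrow> nat) set \<Rightarrow> ('n \<Rightarrow> nat)" where
  "frobenius le C S = (THE f. f \<in> gaps C S \<and> (\<forall>h\<in>gaps C S. le h f))"

definition pseudo_frobenius ::
  "('n \<Rightarrow> nat) set \<Rightarrow> ('n \<Rightarrow> nat) set \<Rightarrow> ('n \<Rightarrow> nat) set" where
  "pseudo_frobenius C S = {x \<in> gaps C S. \<forall>s\<in>S - {0}. x + s \<in> S}"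

definition le_set :: "('n \<Rightarrow> nat) set \<Rightarrow> ('n \<Rightarrow> nat) \<Rightarrow> ('n \<Rightarrow> nat) \<Rightarrow> bool" where
  "le_set L x y \<longleftrightarrow> (\<exists>l\<in>L. y = x + l)"

definition I_S :: "('n \<Rightarrow> nat) set \<Rightarrow> ('n \<Rightarrow> nat) set \<Rightarrow> ('n \<Rightarrow> nat) \<Rightarrow> ('n \<Rightarrow> nat) set" where
  "I_S C S n = {s \<in> S. le_set C s n}"

text \<open>F(S)/2 \<in> N^p, i.e. every coordinate of F(S) is even; h is then F(S)/2.\<close>
definition is_half :: "('n \<Rightarrow> nat) \<Rightarrow> ('n \<Rightarrow> nat) \<Rightarrow> bool" where
  "is_half h f \<longleftrightarrow> (\<forall>i. f i = 2 * h i)"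

definition pseudo_symmetric ::
  "(('n \<Rightarrow> nat) \<Rightarrow> ('n \<Rightarrow> nat) \<Rightarrow> bool) \<Rightarrow> ('n \<Rightarrow> nat) set \<Rightarrow> ('n \<Rightarrow> nat) set \<Rightarrow> bool" where
  "pseudo_symmetric le C S \<longleftrightarrow>
     (\<exists>h. is_half h (frobenius le C S) \<and>
          pseudo_frobenius C S = {frobenius le C S, h})"

end

theory Submission
  imports Defs
begin

lemma mo_refl: assumes "monomial_order le"  shows "le x x"
proof -
  have "\<forall>x. le x x" using assms(1) unfolding monomial_order_def
    by (elim conjE) assumption
  then show ?thesis using assms by blast
qed
lemma mo_antisym: assumes "monomial_order le" "le x y" "le y x" shows "x = y"
proof -
  have "\<forall>x y. le x y \<and> le y x \<longrightarrow> x = y" using assms(1) unfolding monomial_order_def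
    by (elim conjE) assumption
  then show ?thesis using assms by blast
qed
lemma mo_trans: assumes "monomial_order le" "le x y" "le y z" shows "le x z"
proof -
  have "\<forall>x y z. le x y \<and> le y z \<longrightarrow> le x z" using assms(1) unfolding monomial_order_def
    by (elim conjE) assumption
  then show ?thesis using assms by blast
qed
lemma mo_total: assumes "monomial_order le"  shows "le x y \<or> le y x"
proof -
  have "\<forall>x y. le x y \<or> le y x" using assms(1) unfolding monomial_order_def
    by (elim conjE) assumption
  then show ?thesis using assms by blast
qed
lemma mo_compat: assumes "monomial_order le" "le x y" shows "le (x + z) (y + z)"
proof -
  have "\<forall>x y z. le x y \<longrightarrow> le (x + z) (y + z)" using assms(1) unfolding monomial_order_def
    by (elim conjE) assumption
  then show ?thesis using assms by blast
qed
lemma mo_zero: assumes "monomial_order le"  shows "le 0 c"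
proof -
  have "\<forall>c. le 0 c" using assms(1) unfolding monomial_order_def
    by (elim conjE) assumption
  then show ?thesis using assms by blast
qed

lemma mo_max_exists:
  assumes mo: "monomial_order le" and "finite A" "A \<noteq> {}"
  shows "\<exists>m\<in>A. \<forall>x\<in>A. le x m"
  using assms(2,3)
proof (induction A rule: finite_ne_induct)
  case (singleton x) then show ?case using mo_refl[of le, OF mo] by auto
next
  case (insert x A)
  then obtain m where m: "m \<in> A" "\<forall>y\<in>A. le y m" by blast
  show ?case
  proof (cases "le x m")
    case True then show ?thesis using m by auto
  next
    case False
    then have "le m x" using mo_total[of le, OF mo] by blast
    have "\<forall>y\<in>insert x A. le y x"
    proof
      fix y assume "y \<in> insert x A"
      then show "le y x"
      proof
        assume "y = x" then show ?thesis using mo_refl[of le, OF mo] by simp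
      next
        assume "y \<in> A" then have ym: "le y m" using m by blast
        show ?thesis by (rule mo_trans[of le, OF mo ym \<open>le m x\<close>])
      qed
    qed
    then show ?thesis by blast
  qed
qed

lemma mo_le_add: "monomial_order le \<Longrightarrow> le x (x + z)"
proof -
  assume mo: "monomial_order le"
  have "le (0 + x) (z + x)" using mo_compat[of le, OF mo mo_zero[of le, OF mo]] .
  then show "le x (x + z)" by (simp add: add.commute)
qed

lemma cone_add:
  assumes "integer_cone C" "x \<in> C" "y \<in> C" shows "x + y \<in> C"
proof -
  obtain G :: "('a \<Rightarrow> rat) set" where G: "finite G" "\<forall>v\<in>G. \<forall>i. v i \<ge> 0"
    "C = {x. \<exists>c :: ('a \<Rightarrow> rat) \<Rightarrow> rat. (\<forall>v\<in>G. c v \<ge> 0) \<and>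
                   (\<forall>i. of_nat (x i) = (\<Sum>v\<in>G. c v * v i))}"
    using assms(1) unfolding integer_cone_def by blast
  obtain c1 where c1: "\<forall>v\<in>G. c1 v \<ge> 0" "\<forall>i. of_nat (x i) = (\<Sum>v\<in>G. c1 v * v i)"
    using assms(2) G(3) by blast
  obtain c2 where c2: "\<forall>v\<in>G. c2 v \<ge> 0" "\<forall>i. of_nat (y i) = (\<Sum>v\<in>G. c2 v * v i)"
    using assms(3) G(3) by blast
  have "\<exists>c :: ('a \<Rightarrow> rat) \<Rightarrow> rat. (\<forall>v\<in>G. c v \<ge> 0) \<and>
        (\<forall>i. of_nat ((x+y) i) = (\<Sum>v\<in>G. c v * v i))"
    by (rule exI[where x="\<lambda>v. c1 v + c2 v"]) (use c1 c2 in \<open>auto simp: distrib_right sum.distrib\<close>)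
  then show ?thesis using G(3) by simp
qed

lemma cone_half:
  assumes "integer_cone C" "f \<in> C" "\<forall>i. f i = 2 * h i" shows "h \<in> C"
proof -
  obtain G :: "('a \<Rightarrow> rat) set" where G: "finite G" "\<forall>v\<in>G. \<forall>i. v i \<ge> 0"
    "C = {x. \<exists>c :: ('a \<Rightarrow> rat) \<Rightarrow> rat. (\<forall>v\<in>G. c v \<ge> 0) \<and>
                   (\<forall>i. of_nat (x i) = (\<Sum>v\<in>G. c v * v i))}"
    using assms(1) unfolding integer_cone_def by blast
  obtain c1 where c1: "\<forall>v\<in>G. c1 v \<ge> 0" "\<forall>i. of_nat (f i) = (\<Sum>v\<in>G. c1 v * v i)"
    using assms(2) G(3) by blast
  have "\<exists>c :: ('a \<Rightarrow> rat) \<Rightarrow> rat. (\<forall>v\<in>G. c v \<ge> 0) \<and>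
        (\<forall>i. of_nat (h i) = (\<Sum>v\<in>G. c v * v i))"
  proof (rule exI[where x="\<lambda>v. c1 v / 2"], intro conjI allI ballI)
    fix v assume "v \<in> G" then show "0 \<le> c1 v / 2" using c1 by auto
  next
    fix i
    have "of_nat (h i) = (of_nat (f i) :: rat) / 2" using assms(3) by simp
    also have "\<dots> = (\<Sum>v\<in>G. c1 v * v i) / 2" using c1 by simp
    also have "\<dots> = (\<Sum>v\<in>G. c1 v / 2 * v i)" by (simp add: sum_divide_distrib)
    finally show "of_nat (h i) = (\<Sum>v\<in>G. c1 v / 2 * v i)" by simp
  qed
  then show ?thesis using G(3) by simp
qed

theorem mainTheorem3:
  fixes le :: "('n::finite \<Rightarrow> nat) \<Rightarrow> ('n \<Rightarrow> nat) \<Rightarrow> bool"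
    and C S :: "('n \<Rightarrow> nat) set"
  assumes "monomial_order le"
    and "C_semigroup C S"
    and "S \<noteq> C"
  shows "pseudo_symmetric le C S \<longleftrightarrow>
           genus C S = 1 + card (I_S C S (frobenius le C S)) \<and>
           (\<exists>h. is_half h (frobenius le C S))"
proof -
  note mo = assms(1)
  have cone: "integer_cone C" and SC: "S \<subseteq> C" and S0: "0 \<in> S"
    and Sadd: "\<And>x y. x \<in> S \<Longrightarrow> y \<in> S \<Longrightarrow> x + y \<in> S" and fin: "finite (C - S)"
    using assms(2) unfolding C_semigroup_def by auto
  define H where "H = gaps C S"
  have Hdef: "H = C - S" unfolding H_def gaps_def ..
  have finH: "finite H" using fin Hdef by simp
  have Hne: "H \<noteq> {}" using SC assms(3) Hdef by blast
  have antisym: "\<And>x y. le x y \<Longrightarrow> le y x \<Longrightarrow> x = y" using mo_antisym[of le, OF mo] by blast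
  define F where "F = frobenius le C S"
  have Fprop: "F \<in> H \<and> (\<forall>h\<in>H. le h F)"
  proof -
    obtain m where m: "m \<in> H" "\<forall>x\<in>H. le x m" using mo_max_exists[of le, OF mo finH Hne] by blast
    have "frobenius le C S = m" unfolding frobenius_def H_def[symmetric]
    proof (rule the_equality)
      show "m \<in> H \<and> (\<forall>h\<in>H. le h m)" using m by blast
    next
      fix f assume f: "f \<in> H \<and> (\<forall>h\<in>H. le h f)"
      then have "le f m" "le m f" using m by auto
      then show "f = m" by (rule antisym)
    qed
    then show ?thesis using m unfolding F_def by simp
  qed
  have FH: "F \<in> H" and Fmax: "\<And>x. x \<in> H \<Longrightarrow> le x F" using Fprop by auto
  define I where "I = I_S C S F"
  have Idef: "\<And>s. s \<in> I \<longleftrightarrow> s \<in> S \<and> (\<exists>l\<in>C. F = s + l)"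
    unfolding I_def I_S_def le_set_def by auto
  have finI: "finite I"
  proof -
    have "I \<subseteq> (\<lambda>l. F - l) ` H"
    proof
      fix s assume "s \<in> I"
      then obtain l where l: "s \<in> S" "l \<in> C" "F = s + l" using Idef by blast
      have "l \<notin> S" using l FH Hdef Sadd by auto
      moreover have "s = F - l" using l by (simp add: add.commute)
      ultimately have "l \<in> H" "s = F - l" using l Hdef by auto
      then show "s \<in> (\<lambda>l. F - l) ` H" unfolding image_iff by blast
    qed
    then show ?thesis using finH finite_subset by blast
  qed
  have cancel: "\<And>a b c::'n\<Rightarrow>nat. a + b = a + c \<Longrightarrow> b = c" by simp
  have Imap: "\<And>s. s \<in> I \<Longrightarrow> F - s \<in> H \<and> F = s + (F - s)"
  proof -
    fix s assume "s \<in> I"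
    then obtain l where l: "s \<in> S" "l \<in> C" "F = s + l" using Idef by blast
    have "l \<notin> S" using l FH Hdef Sadd by auto
    moreover have "F - s = l" using l by simp
    ultimately show "F - s \<in> H \<and> F = s + (F - s)" using l Hdef by auto
  qed
  have injI: "inj_on (\<lambda>s. F - s) I"
  proof (rule inj_onI)
    fix s t assume st: "s \<in> I" "t \<in> I" "F - s = F - t"
    have "s + (F - s) = t + (F - s)" using Imap[OF st(1)] Imap[OF st(2)] st(3) by metis
    then show "s = t" by simp
  qed
  have FPF: "\<And>s. s \<in> S - {0} \<Longrightarrow> F + s \<in> S"
  proof -
    fix s assume s: "s \<in> S - {0}"
    have "F + s \<in> C" using cone_add[OF cone] FH Hdef s SC by auto
    moreover have "F + s \<notin> H"
    proof
      assume "F + s \<in> H"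
      then have "le (F + s) F" by (rule Fmax)
      moreover have "le F (F + s)" by (rule mo_le_add[of le, OF mo])
      ultimately have "F + s = F" by (rule antisym)
      then show False using s by simp
    qed
    ultimately show "F + s \<in> S" using Hdef by auto
  qed
  have PFdef: "pseudo_frobenius C S = {x \<in> H. \<forall>s\<in>S - {0}. x + s \<in> S}"
    unfolding pseudo_frobenius_def H_def ..
  have belowPF: "\<And>x. x \<in> H \<Longrightarrow> \<exists>y \<in> pseudo_frobenius C S. \<exists>t\<in>S. y = x + t"
  proof -
    fix x assume x: "x \<in> H"
    define A where "A = {y \<in> H. \<exists>t\<in>S. y = x + t}"
    have "x \<in> A" using x S0 unfolding A_def by force
    moreover have "finite A" using finH unfolding A_def by simp
    ultimately obtain m where m: "m \<in> A" "\<forall>y\<in>A. le y m"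
      using mo_max_exists[of le, OF mo] by blast
    obtain t where t: "t \<in> S" "m = x + t" "m \<in> H" using m(1) unfolding A_def by blast
    have "\<forall>s\<in>S - {0}. m + s \<in> S"
    proof
      fix s assume s: "s \<in> S - {0}"
      have "m + s \<in> C" using cone_add[OF cone] t(3) Hdef s SC by auto
      moreover have "m + s \<notin> H"
      proof
        assume ms: "m + s \<in> H"
        have "m + s = x + (t + s)" using t by (simp add: add.assoc)
        then have "m + s \<in> A" using ms t s Sadd unfolding A_def by blast
        then have "le (m + s) m" using m by blast
        moreover have "le m (m + s)" by (rule mo_le_add[of le, OF mo])
        ultimately have "m + s = m" by (rule antisym)
        then show False using s by simp
      qed
      ultimately show "m + s \<in> S" using Hdef by auto
    qed
    then show "\<exists>y \<in> pseudo_frobenius C S. \<exists>t\<in>S. y = x + t" using t PFdef by blast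
  qed
  have imgsub: "\<And>h. F = h + h \<Longrightarrow> h \<notin> S \<Longrightarrow> (\<lambda>s. F - s) ` I \<subseteq> H - {h}"
  proof
    fix h y assume h: "F = h + h" "h \<notin> S" and y: "y \<in> (\<lambda>s. F - s) ` I"
    then obtain s where s: "s \<in> I" "y = F - s" by blast
    have "y \<in> H" using Imap[OF s(1)] s by simp
    moreover have "y \<noteq> h"
    proof
      assume "y = h"
      then have "h + s = h + h" using Imap[OF s(1)] s h by (simp add: add.commute)
      then have "s = h" by simp
      then show False using s(1) Idef h by auto
    qed
    ultimately show "y \<in> H - {h}" by simp
  qed
  have ishalf: "\<And>h. is_half h F \<longleftrightarrow> F = h + h"
    unfolding is_half_def by (auto simp: fun_eq_iff mult_2)
  have cardI: "card ((\<lambda>s. F - s) ` I) = card I" using injI by (simp add: card_image)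
  show ?thesis
    unfolding pseudo_symmetric_def genus_def F_def[symmetric] I_def[symmetric] H_def[symmetric]
      ishalf
  proof
    assume "\<exists>h. F = h + h \<and> pseudo_frobenius C S = {F, h}"
    then obtain h where h: "F = h + h" "pseudo_frobenius C S = {F, h}" by blast
    have hH: "h \<in> H" and hPF: "\<And>s. s \<in> S - {0} \<Longrightarrow> h + s \<in> S"
      using h(2) PFdef by blast+
    have hS: "h \<notin> S" using hH Hdef by auto
    have "(\<lambda>s. F - s) ` I = H - {h}"
    proof
      show "(\<lambda>s. F - s) ` I \<subseteq> H - {h}" using imgsub h(1) hS .
    next
      show "H - {h} \<subseteq> (\<lambda>s. F - s) ` I"
      proof
        fix x assume x: "x \<in> H - {h}"
        obtain y t where yt: "y \<in> pseudo_frobenius C S" "t \<in> S" "y = x + t"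
          using belowPF x by blast
        have "\<exists>u\<in>S. F = u + x"
        proof (cases "y = F")
          case True then show ?thesis using yt by (auto simp: add.commute)
        next
          case False
          then have "y = h" using yt h(2) by blast
          have "t \<noteq> 0" using x yt \<open>y = h\<close> by auto
          then have "h + t \<in> S" using hPF yt by blast
          moreover have "F = (h + t) + x" using h(1) yt \<open>y = h\<close> by (simp add: ac_simps)
          ultimately show ?thesis by blast
        qed
        then obtain u where u: "u \<in> S" "F = u + x" by blast
        have "u \<in> I" using u x Hdef Idef by auto
        moreover have "x = F - u" using u by simp
        ultimately show "x \<in> (\<lambda>s. F - s) ` I" by blast
      qed
    qed
    then have "card I = card (H - {h})" using cardI by simp
    also have "\<dots> = card H - 1" using hH finH by simp
    finally have ci: "card I = card H - 1" .
    have "card H > 0" using hH finH by (auto simp: card_gt_0_iff)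
    then have "card H = 1 + card I" using ci by simp
    then show "card H = 1 + card I \<and> (\<exists>h. F = h + h)" using h by blast
  next
    assume a: "card H = 1 + card I \<and> (\<exists>h. F = h + h)"
    then obtain h where h: "F = h + h" by blast
    have "\<forall>i. F i = 2 * h i" using h by simp
    then have hC: "h \<in> C" using cone_half[OF cone] FH Hdef by blast
    have hS: "h \<notin> S" using h FH Hdef Sadd by auto
    have hH: "h \<in> H" using hC hS Hdef by simp
    have sub: "(\<lambda>s. F - s) ` I \<subseteq> H - {h}" using imgsub h hS .
    have "card ((\<lambda>s. F - s) ` I) = card (H - {h})" using cardI a hH finH by simp
    moreover have fHh: "finite (H - {h})" using finH by simp
    ultimately have img: "(\<lambda>s. F - s) ` I = H - {h}"
      using card_subset_eq[OF fHh sub] by simp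
    have other: "\<And>x. x \<in> H \<Longrightarrow> x \<noteq> h \<Longrightarrow> \<exists>t\<in>S. F = t + x"
    proof -
      fix x assume "x \<in> H" "x \<noteq> h"
      then obtain s where s: "s \<in> I" "x = F - s" using img by blast
      have "F = s + x" using Imap[OF s(1)] s(2) by simp
      moreover have "s \<in> S" using s(1) Idef by blast
      ultimately show "\<exists>t\<in>S. F = t + x" by blast
    qed
    have hPF: "h \<in> pseudo_frobenius C S"
      unfolding PFdef
    proof (intro CollectI conjI ballI hH)
      fix s assume s: "s \<in> S - {0}"
      show "h + s \<in> S"
      proof (rule ccontr)
        assume ns: "h + s \<notin> S"
        have "h + s \<in> C" using cone_add[OF cone hC] s SC by auto
        then have "h + s \<in> H" using ns Hdef by simp
        moreover have "h + s \<noteq> h"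
        proof
          assume "h + s = h" then have "s = 0" by simp
          then show False using s by blast
        qed
        ultimately obtain t where t: "t \<in> S" "F = t + (h + s)" using other by blast
        then have "h + h = h + (t + s)" using h by (simp add: ac_simps)
        then have "h = t + s" by simp
        then show False using hS t s Sadd by auto
      qed
    qed
    have FPF': "F \<in> pseudo_frobenius C S" using FH FPF PFdef by blast
    have "pseudo_frobenius C S = {F, h}"
    proof
      show "{F, h} \<subseteq> pseudo_frobenius C S" using FPF' hPF by blast
    next
      show "pseudo_frobenius C S \<subseteq> {F, h}"
      proof
        fix x assume x: "x \<in> pseudo_frobenius C S"
        show "x \<in> {F, h}"
        proof (rule ccontr)
          assume nx: "x \<notin> {F, h}"
          have xH: "x \<in> H" using x PFdef by blast
          obtain t where t: "t \<in> S" "F = t + x" using other xH nx by blast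
          have "t \<noteq> 0"
          proof
            assume "t = 0" then have "x = F" using t(2) by simp
            then show False using nx by blast
          qed
          moreover have "\<forall>s\<in>S - {0}. x + s \<in> S" using x PFdef by blast
          ultimately have "x + t \<in> S" using t(1) by blast
          then show False using t FH Hdef by (simp add: add.commute)
        qed
      qed
    qed
    then show "\<exists>h. F = h + h \<and> pseudo_frobenius C S = {F, h}" using h by blast
  qed
qed

end
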